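(* Let $\epsilon<2$ be a constant. For any instance oracle $f$ with $\max\{|f(G,v)|: G \text{ an } n\text{-node graph}, v\in G\}=o(n\log n)$ and any deterministic exploration algorithm $A$, there exist a constant $c>0$ and infinitely many $n$ such that for each of them some $n$-node graph $G$ and starting node $v$ force the agent executing $A$ with input $f(G,v)$ from $v$ to make at least $c n^{\epsilon}$ edge traversals before completing exploration; i.e., exploration takes time $\Omega(n^\epsilon)$ on some $n$-node graph, for arbitrarily large $n$.
   Context: Model: a graph is a simple connected undirected graph with $n$ nodes. Nodes are unlabeled; at each node of degree $d$ the incident edges carry distinct port numbers $0,\dots,d-1$, arbitrarily assigned. A mobile agent starts at some node. At each step, located at a node $u$ whose degree it knows, it chooses a port at $u$ and traverses the corresponding edge to a neighbor $w$; upon arrival it learns the port number of this edge at $w$ and the degree of $w$. The agent must visit all nodes and stop; the time of exploration is the number of edge traversals. A deterministic exploration algorithm receives as input a binary string (advice); its size is its length. An instance oracle is a function assigning a binary string $f(G,v)$ to each pair $(G,v)$ where $G$ is a port-numbered graph and $v$ is the starting node of the agent. Logarithms are to base 2. *)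

theory Defs
  imports Complex_Main "HOL-Library.Landau_Symbols"
begin

text \<open>A port-numbered graph with nodes 0..<nodes G (the labels are invisible to the agent).
  deg G u is the degree of u; port G u p = (w, q) means that the edge with port p at u
  leads to w and has port q at w.\<close>
record pgraph =
  nodes :: nat
  deg :: "nat \<Rightarrow> nat"
  port :: "nat \<Rightarrow> nat \<Rightarrow> nat \<times> nat"

definition adj :: "pgraph \<Rightarrow> nat \<Rightarrow> nat \<Rightarrow> bool" where
  "adj G u w \<longleftrightarrow> u < nodes G \<and> (\<exists>p < deg G u. fst (port G u p) = w)"

text \<open>Valid port-numbered simple connected graph (with a canonical normal form outside the
  relevant domain, so that the representation is determined by the graph itself).\<close>
definition valid_pgraph :: "pgraph \<Rightarrow> bool" where
  "valid_pgraph G \<longleftrightarrow>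
     (\<forall>u. nodes G \<le> u \<longrightarrow> deg G u = 0) \<and>
     (\<forall>u p. \<not> (u < nodes G \<and> p < deg G u) \<longrightarrow> port G u p = (0, 0)) \<and>
     (\<forall>u < nodes G. \<forall>p < deg G u.
        fst (port G u p) < nodes G \<and>
        snd (port G u p) < deg G (fst (port G u p)) \<and>
        port G (fst (port G u p)) (snd (port G u p)) = (u, p) \<and>
        fst (port G u p) \<noteq> u) \<and>
     (\<forall>u < nodes G. inj_on (\<lambda>p. fst (port G u p)) {..<deg G u}) \<and>
     (\<forall>u < nodes G. \<forall>w < nodes G. (adj G)\<^sup>*\<^sup>* u w)"

text \<open>A deterministic exploration algorithm: given the advice, the degree of the start node and
  the history of observations (for each traversal so far: the port by which the agent entered
  the new node and that node's degree), it either stops (None) or takes a port (Some p).\<close>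
type_synonym algo = "bool list \<Rightarrow> nat \<Rightarrow> (nat \<times> nat) list \<Rightarrow> nat option"

type_synonym advice_fn = "pgraph \<Rightarrow> nat \<Rightarrow> bool list"

fun run :: "pgraph \<Rightarrow> algo \<Rightarrow> bool list \<Rightarrow> nat \<Rightarrow> nat \<Rightarrow> nat \<times> (nat \<times> nat) list" where
  "run G A s v 0 = (v, [])"
| "run G A s v (Suc k) =
     (let (u, h) = run G A s v k in
      case A s (deg G v) h of
        None \<Rightarrow> (u, h)
      | Some p \<Rightarrow> (let (w, q) = port G u p in (w, h @ [(q, deg G w)])))"

definition explores_in :: "pgraph \<Rightarrow> algo \<Rightarrow> bool list \<Rightarrow> nat \<Rightarrow> nat \<Rightarrow> bool" where
  "explores_in G A s v t \<longleftrightarrow>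
     (\<forall>k < t. \<exists>p. A s (deg G v) (snd (run G A s v k)) = Some p
                    \<and> p < deg G (fst (run G A s v k))) \<and>
     A s (deg G v) (snd (run G A s v t)) = None \<and>
     {..<nodes G} \<subseteq> {fst (run G A s v k) | k. k \<le> t}"

definition max_advice :: "advice_fn \<Rightarrow> nat \<Rightarrow> nat" where
  "max_advice f n = Max {length (f G v) | G v. valid_pgraph G \<and> nodes G = n \<and> v < n}"

end

theory Submission
  imports Defs "HOL-Library.FuncSet" "HOL-Number_Theory.Cong" "HOL-Library.Infinite_Set"
begin


definition gdeg :: "nat \<Rightarrow> nat \<Rightarrow> nat" where
  "gdeg r u = (if u < 2*r+1 then 2*r else if u < 4*r+2 then 2 else 0)"

definition gport :: "nat \<Rightarrow> (nat \<Rightarrow> nat) \<Rightarrow> nat \<Rightarrow> nat \<Rightarrow> nat \<times> nat" where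
  "gport r h u p =
   (if u < 2*r+1 \<and> p < 2*r then
     (if Suc p \<le> r then (if h u = Suc p then (2*r+1+u, 0) else ((u + Suc p) mod (2*r+1), 2*r - 1 - p))
      else (if h ((u + Suc p) mod (2*r+1)) = 2*r+1 - Suc p then (2*r+1 + (u + Suc p) mod (2*r+1), 1)
            else ((u + Suc p) mod (2*r+1), 2*r - 1 - p)))
    else if 2*r+1 \<le> u \<and> u < 4*r+2 \<and> p < 2 then
     (if p = 0 then (u - (2*r+1), h (u-(2*r+1)) - 1)
      else ((u - (2*r+1) + h (u-(2*r+1))) mod (2*r+1), 2*r - h (u-(2*r+1))))
    else (0,0))"

definition gr :: "nat \<Rightarrow> (nat \<Rightarrow> nat) \<Rightarrow> pgraph" where
  "gr r h = \<lparr>nodes = 4*r+2, deg = gdeg r, port = gport r h\<rparr>"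

definition fam :: "nat \<Rightarrow> (nat \<Rightarrow> nat) set" where
  "fam r = PiE {..<2*r+1} (\<lambda>_. {1..r})"

lemma modback:
  fixes u g m :: nat
  assumes "u < m" "0 < g" "g < m"
  shows "((u + g) mod m + (m - g)) mod m = u"
proof -
  have "((u + g) mod m + (m - g)) mod m = (u + g + (m - g)) mod m" by (simp add: mod_add_left_eq)
  also have "u + g + (m - g) = u + m" using assms by simp
  finally show ?thesis using assms by simp
qed

lemma modne:
  fixes u g m :: nat
  assumes "u < m" "0 < g" "g < m"
  shows "(u + g) mod m \<noteq> u"
proof
  assume "(u + g) mod m = u"
  then have "(u+g) mod m = (u + 0) mod m" using assms by (simp del: add_0_right)
  then have "[u + g = u + 0] (mod m)" by (simp add: cong_def)
  then have "[g = 0] (mod m)" by (metis cong_add_lcancel_nat)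
  then show False using assms by (simp add: cong_def)
qed

lemma modinj:
  fixes u g1 g2 m :: nat
  assumes "(u + g1) mod m = (u + g2) mod m" "g1 < m" "g2 < m"
  shows "g1 = g2"
proof -
  have "[u + g1 = u + g2] (mod m)" using assms by (simp add: cong_def)
  then have "[g1 = g2] (mod m)" by (metis cong_add_lcancel_nat)
  then show ?thesis using assms by (simp add: cong_def)
qed

lemma fam_h: "h \<in> fam r \<Longrightarrow> a < 2*r+1 \<Longrightarrow> 1 \<le> h a \<and> h a \<le> r"
  unfolding fam_def by (simp add: PiE_iff)


lemma gp1: "u < 2*r+1 \<Longrightarrow> p < 2*r \<Longrightarrow> Suc p \<le> r \<Longrightarrow> h u = Suc p \<Longrightarrow> gport r h u p = (2*r+1+u, 0)"
  by (simp add: gport_def)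
lemma gp2: "u < 2*r+1 \<Longrightarrow> p < 2*r \<Longrightarrow> Suc p \<le> r \<Longrightarrow> h u \<noteq> Suc p \<Longrightarrow> gport r h u p = ((u + Suc p) mod (2*r+1), 2*r - 1 - p)"
  by (simp add: gport_def)
lemma gp3: "u < 2*r+1 \<Longrightarrow> p < 2*r \<Longrightarrow> \<not> Suc p \<le> r \<Longrightarrow> h ((u + Suc p) mod (2*r+1)) = 2*r+1 - Suc p \<Longrightarrow> gport r h u p = (2*r+1+(u + Suc p) mod (2*r+1), 1)"
  by (simp add: gport_def)
lemma gp4: "u < 2*r+1 \<Longrightarrow> p < 2*r \<Longrightarrow> \<not> Suc p \<le> r \<Longrightarrow> h ((u + Suc p) mod (2*r+1)) \<noteq> 2*r+1 - Suc p \<Longrightarrow> gport r h u p = ((u + Suc p) mod (2*r+1), 2*r - 1 - p)"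
  by (simp add: gport_def)
lemma gp5: "a < 2*r+1 \<Longrightarrow> gport r h (2*r+1+a) 0 = (a, h a - 1)"
  by (simp add: gport_def)
lemma gp6: "a < 2*r+1 \<Longrightarrow> gport r h (2*r+1+a) (Suc 0) = ((a + h a) mod (2*r+1), 2*r - h a)"
  by (simp add: gport_def)
lemma gp0: "\<not> (u < 4*r+2 \<and> p < gdeg r u) \<Longrightarrow> gport r h u p = (0,0)"
  by (auto simp: gport_def gdeg_def)

lemma gport_valid:
  assumes h: "h \<in> fam r" and u: "u < 4*r+2" and p: "p < gdeg r u"
  shows "fst (gport r h u p) < 4*r+2 \<and> snd (gport r h u p) < gdeg r (fst (gport r h u p)) \<and>
         gport r h (fst (gport r h u p)) (snd (gport r h u p)) = (u, p) \<and> fst (gport r h u p) \<noteq> u"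
proof (cases "u < 2*r+1")
  case True
  define m where "m = 2*r+1"
  define b where "b = (u + Suc p) mod m"
  have pp: "p < 2*r" using p True by (simp add: gdeg_def)
  have g0: "0 < Suc p" "Suc p < m" using pp by (auto simp: m_def)
  have bm: "b < 2*r+1" using g0 by (simp add: b_def m_def)
  have bu: "b \<noteq> u" using modne[of u m "Suc p"] g0 True by (simp add: b_def m_def)
  have bk: "(b + (m - Suc p)) mod m = u" using modback[of u m "Suc p"] g0 True by (simp add: b_def m_def)
  have hb: "1 \<le> h b" "h b \<le> r" using fam_h[OF h bm] by auto
  have hu: "1 \<le> h u" "h u \<le> r" using fam_h[OF h True] by auto
  have q: "2*r - 1 - p < 2*r" "Suc (2*r - 1 - p) = m - Suc p" "2*r - 1 - (2*r - 1 - p) = p"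
    using pp by (auto simp: m_def)
  have bkk: "(b + Suc (2*r-1-p)) mod (2*r+1) = u" using bk q by (simp add: m_def)
  show ?thesis
  proof (cases "Suc p \<le> r")
    case c1: True
    show ?thesis
    proof (cases "h u = Suc p")
      case True
      then show ?thesis using c1 \<open>u < 2*r+1\<close> pp gp1[of u r p h] gp5[of u r h]
        by (simp add: gdeg_def)
    next
      case False
      have e1: "gport r h u p = (b, 2*r-1-p)" using gp2[of u r p h] \<open>u < 2*r+1\<close> pp c1 False by (simp add: b_def m_def)
      have nc: "\<not> Suc (2*r-1-p) \<le> r" using q c1 by (simp add: m_def)
      have nh: "h ((b + Suc (2*r-1-p)) mod (2*r+1)) \<noteq> 2*r+1 - Suc (2*r-1-p)"
        unfolding bkk using q False pp by (simp add: m_def)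
      have e2: "gport r h b (2*r-1-p) = (u, p)" using gp4[of b r "2*r-1-p" h] bm q(1) nc nh bkk q by simp
      show ?thesis using e1 e2 bm bu q by (simp add: gdeg_def)
    qed
  next
    case c1: False
    show ?thesis
    proof (cases "h b = m - Suc p")
      case True
      have e1: "gport r h u p = (2*r+1+b, 1)" using gp3[of u r p h] \<open>u < 2*r+1\<close> pp c1 True by (simp add: b_def m_def)
      have e2: "gport r h (2*r+1+b) 1 = (u, p)" using gp6[of b r h] bm True bk q by (simp add: m_def)
      show ?thesis using e1 e2 bm \<open>u < 2*r+1\<close> by (simp add: gdeg_def)
    next
      case False
      have e1: "gport r h u p = (b, 2*r-1-p)" using gp4[of u r p h] \<open>u < 2*r+1\<close> pp c1 False by (simp add: b_def m_def)
      have nc: "Suc (2*r-1-p) \<le> r" using q c1 by (simp add: m_def)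
      have nh: "h b \<noteq> Suc (2*r-1-p)" using q False by simp
      have e2: "gport r h b (2*r-1-p) = (u, p)" using gp2[of b r "2*r-1-p" h] bm q(1) nc nh bkk q by simp
      show ?thesis using e1 e2 bm bu q by (simp add: gdeg_def)
    qed
  qed
next
  case False
  define a where "a = u - (2*r+1)"
  have a: "a < 2*r+1" "u = 2*r+1+a" using False u by (auto simp: a_def)
  have pp: "p < 2" using p False u by (simp add: gdeg_def split: if_splits)
  have ha: "1 \<le> h a" "h a \<le> r" using fam_h[OF h a(1)] by auto
  show ?thesis
  proof (cases "p = 0")
    case True
    have e1: "gport r h u p = (a, h a - 1)" using gp5[of a r h] a True by simp
    have e2: "gport r h a (h a - 1) = (u, p)" using gp1[of a r "h a - 1" h] ha a True by simp
    show ?thesis using e1 e2 a ha by (simp add: gdeg_def)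
  next
    case False
    define b where "b = (a + h a) mod (2*r+1)"
    have p1: "p = Suc 0" using pp False by simp
    have bm: "b < 2*r+1" by (simp add: b_def)
    have bk: "(b + (2*r+1 - h a)) mod (2*r+1) = a" using modback[of a "2*r+1" "h a"] ha a by (simp add: b_def)
    have q: "2*r - h a < 2*r" "Suc (2*r - h a) = 2*r+1 - h a" "\<not> Suc (2*r - h a) \<le> r"
      "2*r+1 - Suc (2*r - h a) = h a"
      using ha by auto
    have e1: "gport r h u p = (b, 2*r - h a)" using gp6[of a r h] a p1 by (simp add: b_def)
    have e2: "gport r h b (2*r - h a) = (u, p)" using gp3[of b r "2*r - h a" h] bm q(1) q(3) bk q a p1 by simp
    have bu: "b \<noteq> u" using bm a by simp
    show ?thesis using e1 e2 bm bu q by (simp add: gdeg_def)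
  qed
qed
lemma gport_tgt:
  assumes u: "u < 2*r+1" and p: "p < 2*r"
  shows "(fst (gport r h u p) = 2*r+1+u \<and> h u = Suc p) \<or>
         (fst (gport r h u p) \<noteq> 2*r+1+u \<and> fst (gport r h u p) < 4*r+2 \<and>
          fst (gport r h u p) mod (2*r+1) = (u + Suc p) mod (2*r+1))"
proof -
  define b where "b = (u + Suc p) mod (2*r+1)"
  have g0: "0 < Suc p" "Suc p < 2*r+1" using p by auto
  have bu: "b \<noteq> u" using modne[OF u g0] by (simp add: b_def)
  have bm: "b < 2*r+1" by (simp add: b_def)
  have e1: "Suc p \<le> r \<Longrightarrow> h u = Suc p \<Longrightarrow> gport r h u p = (2*r+1+u, 0)" using gp1[of u r p h] u p by simp
  have e2: "Suc p \<le> r \<Longrightarrow> h u \<noteq> Suc p \<Longrightarrow> gport r h u p = (b, 2*r-1-p)" using gp2[of u r p h] u p unfolding b_def by simp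
  have e3: "\<not> Suc p \<le> r \<Longrightarrow> h b = 2*r+1 - Suc p \<Longrightarrow> gport r h u p = (2*r+1+b, 1)" using gp3[of u r p h] u p unfolding b_def by simp
  have e4: "\<not> Suc p \<le> r \<Longrightarrow> h b \<noteq> 2*r+1 - Suc p \<Longrightarrow> gport r h u p = (b, 2*r-1-p)" using gp4[of u r p h] u p unfolding b_def by simp
  have m1: "(2*r+1+b) mod (2*r+1) = b" "b mod (2*r+1) = b"
    using bm mod_add_self1[of "2*r+1" b] by auto
  show ?thesis unfolding b_def[symmetric]
    using e1 e2 e3 e4 bu bm m1
    by (cases "Suc p \<le> r"; cases "h u = Suc p"; cases "h b = 2*r+1 - Suc p") auto
qed

lemma gport_inj:
  assumes h: "h \<in> fam r" and u: "u < 4*r+2"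
  shows "inj_on (\<lambda>p. fst (gport r h u p)) {..<gdeg r u}"
proof (cases "u < 2*r+1")
  case True
  show ?thesis
  proof (rule inj_onI)
    fix p1 p2 assume p1: "p1 \<in> {..<gdeg r u}" and p2: "p2 \<in> {..<gdeg r u}"
      and eq: "fst (gport r h u p1) = fst (gport r h u p2)"
    have pp: "p1 < 2*r" "p2 < 2*r" using p1 p2 True by (auto simp: gdeg_def)
    note t1 = gport_tgt[OF True pp(1), of h] and t2 = gport_tgt[OF True pp(2), of h]
    show "p1 = p2"
    proof (cases "fst (gport r h u p1) = 2*r+1+u")
      case True
      then show ?thesis using t1 t2 eq by auto
    next
      case False
      then have "(u + Suc p1) mod (2*r+1) = (u + Suc p2) mod (2*r+1)" using t1 t2 eq by auto
      then have "Suc p1 = Suc p2" by (rule modinj) (use pp in auto)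
      then show ?thesis by simp
    qed
  qed
next
  case False
  define a where "a = u - (2*r+1)"
  have a: "a < 2*r+1" "u = 2*r+1+a" using False u by (auto simp: a_def)
  have "(a + h a) mod (2*r+1) \<noteq> a" using modne[OF a(1), of "h a"] fam_h[OF h a(1)] by auto
  then show ?thesis using gp5[of a r h] gp6[of a r h] False u a
    by (auto simp: gdeg_def inj_on_def less_2_cases_iff)
qed

lemma adj_sym:
  assumes h: "h \<in> fam r" and "adj (gr r h) u w"
  shows "adj (gr r h) w u"
proof -
  obtain p where u: "u < 4*r+2" and p: "p < gdeg r u" and w: "fst (gport r h u p) = w"
    using assms(2) by (auto simp: adj_def gr_def)
  note v = gport_valid[OF h u p]
  show ?thesis unfolding adj_def gr_def using v w
    by (auto intro!: exI[of _ "snd (gport r h u p)"])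
qed

lemma rtranclp_sym:
  assumes "\<And>x y. R x y \<Longrightarrow> R y x" and "R\<^sup>*\<^sup>* x y"
  shows "R\<^sup>*\<^sup>* y x"
  using assms(2)
proof (induction rule: rtranclp_induct)
  case base then show ?case by simp
next
  case (step y z)
  then show ?case using assms(1) by (meson converse_rtranclp_into_rtranclp)
qed

lemma adj_port:
  "u < 4*r+2 \<Longrightarrow> p < gdeg r u \<Longrightarrow> fst (gport r h u p) = w \<Longrightarrow> adj (gr r h) u w"
  unfolding adj_def gr_def by auto

lemma reach0_clique:
  assumes h: "h \<in> fam r" and u: "u < 2*r+1"
  shows "(adj (gr r h))\<^sup>*\<^sup>* u 0"
proof (cases "u = 0")
  case True then show ?thesis by simp
next
  case False
  define p where "p = 2*r - u"
  have pp: "p < 2*r" "Suc p = 2*r+1-u" using False u by (auto simp: p_def)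
  have key: "(u + Suc p) mod (2*r+1) = 0" using pp u by simp
  have dg: "p < gdeg r u" using pp u by (simp add: gdeg_def)
  have u4: "u < 4*r+2" using u by simp
  note t = gport_tgt[OF u pp(1), of h]
  show ?thesis
  proof (cases "fst (gport r h u p) = 2*r+1+u")
    case True
    then have hu: "h u = Suc p" using t by auto
    have a1: "adj (gr r h) u (2*r+1+u)" using adj_port[OF u4 dg True] .
    have "fst (gport r h (2*r+1+u) 1) = 0" using gp6[of u r h] u hu key by simp
    then have a2: "adj (gr r h) (2*r+1+u) 0" by (intro adj_port[of _ r 1]) (use u in \<open>auto simp: gdeg_def\<close>)
    show ?thesis using a1 a2 by auto
  next
    case False
    then have w: "fst (gport r h u p) < 4*r+2" "fst (gport r h u p) mod (2*r+1) = 0" using t key by auto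
    have a1: "adj (gr r h) u (fst (gport r h u p))" using adj_port[OF u4 dg refl] .
    show ?thesis
    proof (cases "fst (gport r h u p) = 0")
      case True then show ?thesis using a1 by auto
    next
      case nz: False
      have "fst (gport r h u p) = 2*r+1"
      proof -
        obtain k where k: "fst (gport r h u p) = (2*r+1) * k" using w(2) by (metis mod_0_imp_dvd dvdE)
        have "k < 2" using w(1) k by (cases "k \<ge> 2") (auto dest: mult_le_mono2[of 2 k "2*r+1"])
        moreover have "k \<noteq> 0" using nz k by auto
        ultimately show ?thesis using k by (cases k) auto
      qed
      moreover have "fst (gport r h (2*r+1+0) 0) = 0" using gp5[of 0 r h] by simp
      then have "adj (gr r h) (2*r+1) 0" by (intro adj_port[of _ r 0]) (auto simp: gdeg_def)
      ultimately show ?thesis using a1 by (metis converse_rtranclp_into_rtranclp r_into_rtranclp)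
    qed
  qed
qed

lemma reach0:
  assumes h: "h \<in> fam r" and u: "u < 4*r+2"
  shows "(adj (gr r h))\<^sup>*\<^sup>* u 0"
proof (cases "u < 2*r+1")
  case True then show ?thesis using reach0_clique[OF h] by simp
next
  case False
  define a where "a = u - (2*r+1)"
  have a: "a < 2*r+1" "u = 2*r+1+a" using False u by (auto simp: a_def)
  have "adj (gr r h) u a" using gp5[of a r h] a by (intro adj_port[of _ r 0]) (auto simp: gdeg_def)
  then show ?thesis using reach0_clique[OF h a(1)] by (meson converse_rtranclp_into_rtranclp)
qed

lemma gr_valid:
  assumes h: "h \<in> fam r"
  shows "valid_pgraph (gr r h)"
proof -
  have conn: "(adj (gr r h))\<^sup>*\<^sup>* u w" if "u < 4*r+2" "w < 4*r+2" for u w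
  proof -
    have "(adj (gr r h))\<^sup>*\<^sup>* w 0" using reach0[OF h that(2)] .
    then have "(adj (gr r h))\<^sup>*\<^sup>* 0 w" by (rule rtranclp_sym[rotated]) (rule adj_sym[OF h])
    then show ?thesis using reach0[OF h that(1)] by (meson rtranclp_trans)
  qed
  show ?thesis unfolding valid_pgraph_def
    using gp0[of _ r _ h] gport_valid[OF h] gport_inj[OF h] conn
    by (auto simp: gr_def gdeg_def)
qed



lemma run_Suc_Some:
  assumes "A s (deg G v) (snd (run G A s v k)) = Some p"
  shows "run G A s v (Suc k) = (fst (port G (fst (run G A s v k)) p),
     snd (run G A s v k) @ [(snd (port G (fst (run G A s v k)) p), deg G (fst (port G (fst (run G A s v k)) p)))])"
  using assms by (cases "run G A s v k") (simp add: Let_def split: prod.splits)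

lemma run_Suc_None:
  assumes "A s (deg G v) (snd (run G A s v k)) = None"
  shows "run G A s v (Suc k) = run G A s v k"
  using assms by (cases "run G A s v k") simp

lemma gport_cases:
  "(u < 2*r+1 \<and> p < 2*r) \<or> (\<exists>a. a < 2*r+1 \<and> u = 2*r+1+a \<and> (p = 0 \<or> p = 1)) \<or> gport r h u p = (0,0)"
proof (cases "u < 4*r+2 \<and> p < gdeg r u")
  case True
  show ?thesis
  proof (cases "u < 2*r+1")
    case c: True then show ?thesis using True by (simp add: gdeg_def)
  next
    case False
    then have "u - (2*r+1) < 2*r+1 \<and> u = 2*r+1+(u - (2*r+1)) \<and> (p = 0 \<or> p = 1)"
      using True by (auto simp: gdeg_def)
    then show ?thesis by blast
  qed
next
  case False then show ?thesis using gp0[of u r p h] by blast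
qed

lemma gport_lt: "fst (gport r h u p) < 4*r+2"
proof -
  consider "u < 2*r+1 \<and> p < 2*r" | a where "a < 2*r+1" "u = 2*r+1+a" "p = 0"
    | a where "a < 2*r+1" "u = 2*r+1+a" "p = 1" | "gport r h u p = (0,0)"
    using gport_cases[of u r p h] by blast
  then show ?thesis
  proof cases
    case 1 then show ?thesis using gport_tgt[of u r p h] by auto
  next
    case (2 a) then show ?thesis using gp5[of a r h] by auto
  next
    case (3 a)
    obtain c where c: "c = (a + h a) mod (2*r+1)" by simp
    have cm: "c < 2*r+1" using c by simp
    have e: "gport r h u p = (c, 2*r - h a)" using gp6[of a r h] 3 c by simp
    show ?thesis using e cm by simp
  qed simp
qed

lemma gport_clique_eq:
  assumes "u < 2*r+1" "p < 2*r" "b = (u + Suc p) mod (2*r+1)"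
  shows "gport r h u p = (if Suc p \<le> r then (if h u = Suc p then (2*r+1+u, 0) else (b, 2*r-1-p))
      else (if h b = 2*r+1 - Suc p then (2*r+1+b, 1) else (b, 2*r-1-p)))"
  using assms unfolding gport_def by simp

lemma gport_hidden_bit:
  assumes "2*r+1 \<le> fst (gport r h u p)" shows "snd (gport r h u p) \<le> 1"
proof -
  consider "u < 2*r+1 \<and> p < 2*r" | a where "a < 2*r+1" "u = 2*r+1+a" "p = 0"
    | a where "a < 2*r+1" "u = 2*r+1+a" "p = 1" | "gport r h u p = (0,0)"
    using gport_cases[of u r p h] by blast
  then show ?thesis
  proof cases
    case 1
    then have u: "u < 2*r+1" and p: "p < 2*r" by auto
    obtain b where b: "b = (u + Suc p) mod (2*r+1)" by simp
    have bm: "b < 2*r+1" using b by simp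
    show ?thesis
      using assms gport_clique_eq[OF u p b, of h] bm by (auto split: if_splits)
  next
    case (2 a) then show ?thesis using assms gp5[of a r h] by auto
  next
    case (3 a)
    obtain c where c: "c = (a + h a) mod (2*r+1)" by simp
    have cm: "c < 2*r+1" using c by simp
    have e: "gport r h u p = (c, 2*r - h a)" using gp6[of a r h] 3 c by simp
    show ?thesis using e cm assms by simp
  next
    case 4 then show ?thesis using assms by auto
  qed
qed


definition R :: "nat \<Rightarrow> (nat \<Rightarrow> nat) \<Rightarrow> algo \<Rightarrow> bool list \<Rightarrow> nat \<Rightarrow> nat \<times> (nat \<times> nat) list" where
  "R r h A s k = run (gr r h) A s 0 k"

definition fv :: "nat \<Rightarrow> (nat \<Rightarrow> nat) \<Rightarrow> algo \<Rightarrow> bool list \<Rightarrow> nat \<Rightarrow> nat" where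
  "fv r h A s a = (LEAST k. fst (R r h A s (Suc k)) = 2*r+1+a)"

definition cert :: "nat \<Rightarrow> (nat \<Rightarrow> nat) \<Rightarrow> algo \<Rightarrow> bool list \<Rightarrow> nat set" where
  "cert r h A s = (\<lambda>a. 2 * fv r h A s a + fst (last (snd (R r h A s (Suc (fv r h A s a)))))) ` {..<2*r+1}"

lemma R0: "R r h A s 0 = (0, [])" by (simp add: R_def)

lemma deg_gr: "deg (gr r h) = gdeg r" by (simp add: gr_def)
lemma port_gr: "port (gr r h) = gport r h" by (simp add: gr_def)
lemma nodes_gr: "nodes (gr r h) = 4*r+2" by (simp add: gr_def)

lemma deg_gr0: "deg (gr r h) 0 = 2*r" by (simp add: gr_def gdeg_def)

lemma R_step:
  assumes "explores_in (gr r h) A s 0 t" "k < t"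
  obtains p where "A s (2*r) (snd (R r h A s k)) = Some p" "p < gdeg r (fst (R r h A s k))"
    "R r h A s (Suc k) = (fst (gport r h (fst (R r h A s k)) p),
        snd (R r h A s k) @ [(snd (gport r h (fst (R r h A s k)) p), gdeg r (fst (gport r h (fst (R r h A s k)) p)))])"
proof -
  obtain p where p: "A s (deg (gr r h) 0) (snd (run (gr r h) A s 0 k)) = Some p"
     "p < deg (gr r h) (fst (run (gr r h) A s 0 k))"
  proof -
    have "\<forall>k < t. \<exists>p. A s (deg (gr r h) 0) (snd (run (gr r h) A s 0 k)) = Some p
                    \<and> p < deg (gr r h) (fst (run (gr r h) A s 0 k))"
      using assms(1)[unfolded explores_in_def] by (elim conjE)
    then show ?thesis using that assms(2) by blast
  qed
  note e = run_Suc_Some[where A=A and s=s and G="gr r h" and v=0 and k=k and p=p, OF p(1)]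
  show ?thesis
  proof (rule that[of p])
    show "A s (2*r) (snd (R r h A s k)) = Some p" using p(1) by (simp only: R_def deg_gr0)
    show "p < gdeg r (fst (R r h A s k))" using p(2) by (simp only: R_def deg_gr)
    show "R r h A s (Suc k) = (fst (gport r h (fst (R r h A s k)) p),
        snd (R r h A s k) @ [(snd (gport r h (fst (R r h A s k)) p), gdeg r (fst (gport r h (fst (R r h A s k)) p)))])"
      using e by (simp only: R_def deg_gr port_gr)
  qed
qed

lemma R_visit:
  assumes "explores_in (gr r h) A s 0 t" "a < 2*r+1"
  shows "\<exists>k<t. fst (R r h A s (Suc k)) = 2*r+1+a"
proof -
  have sub: "{..<nodes (gr r h)} \<subseteq> {fst (run (gr r h) A s 0 k) |k. k \<le> t}"
    using assms(1)[unfolded explores_in_def] by (elim conjE)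
  have "2*r+1+a \<in> {..<nodes (gr r h)}" using assms(2) by (simp add: gr_def)
  then have "2*r+1+a \<in> {fst (run (gr r h) A s 0 k) |k. k \<le> t}" by (rule subsetD[OF sub])
  then have "\<exists>k. 2*r+1+a = fst (run (gr r h) A s 0 k) \<and> k \<le> t" by simp
  then obtain k where k: "k \<le> t" "fst (R r h A s k) = 2*r+1+a"
    unfolding R_def by auto
  have "k \<noteq> 0"
  proof
    assume "k = 0" then show False using k(2) R0[of r h A s] by simp
  qed
  then obtain j where "k = Suc j" by (cases k) auto
  then have "j < t \<and> fst (R r h A s (Suc j)) = 2*r+1+a" using k by simp
  then show ?thesis by blast
qed

lemma fv_props:
  assumes "explores_in (gr r h) A s 0 t" "a < 2*r+1"
  shows "fv r h A s a < t" "fst (R r h A s (Suc (fv r h A s a))) = 2*r+1+a"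
    "\<And>j. j < fv r h A s a \<Longrightarrow> fst (R r h A s (Suc j)) \<noteq> 2*r+1+a"
proof -
  obtain k where k: "k < t" "fst (R r h A s (Suc k)) = 2*r+1+a" using R_visit[OF assms] by blast
  show "fv r h A s a < t" unfolding fv_def using k by (meson Least_le le_less_trans)
  show "fst (R r h A s (Suc (fv r h A s a))) = 2*r+1+a" unfolding fv_def using k(2) by (rule LeastI)
  show "\<And>j. j < fv r h A s a \<Longrightarrow> fst (R r h A s (Suc j)) \<noteq> 2*r+1+a"
    unfolding fv_def by (rule not_less_Least)
qed

lemma bit_le1:
  assumes "explores_in (gr r h) A s 0 t" "k < t" "2*r+1 \<le> fst (R r h A s (Suc k))"
  shows "fst (last (snd (R r h A s (Suc k)))) \<le> 1"
proof -
  obtain p where p: "R r h A s (Suc k) = (fst (gport r h (fst (R r h A s k)) p),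
        snd (R r h A s k) @ [(snd (gport r h (fst (R r h A s k)) p), gdeg r (fst (gport r h (fst (R r h A s k)) p)))])"
    using R_step[OF assms(1,2)] by blast
  show ?thesis using assms(3) gport_hidden_bit[of r h "fst (R r h A s k)" p] unfolding p by simp
qed

lemma first_in_cert:
  assumes "explores_in (gr r h) A s 0 t" "k < t" "a < 2*r+1" "fst (R r h A s (Suc k)) = 2*r+1+a"
    "\<forall>j\<le>k. fst (R r h A s j) \<noteq> 2*r+1+a"
  shows "2*k + fst (last (snd (R r h A s (Suc k)))) \<in> cert r h A s"
proof -
  have "fv r h A s a = k" unfolding fv_def
  proof (rule Least_equality)
    show "fst (R r h A s (Suc k)) = 2*r+1+a" by fact
    fix j assume "fst (R r h A s (Suc j)) = 2*r+1+a"
    then show "k \<le> j" using assms(5) by (metis not_less_eq_eq)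
  qed
  then show ?thesis unfolding cert_def using assms(3) by force
qed

lemma cert_hidden:
  assumes "explores_in (gr r h) A s 0 t" "x \<in> cert r h A s"
  shows "x div 2 < t \<and> 2*r+1 \<le> fst (R r h A s (Suc (x div 2)))"
proof -
  obtain a where a: "a < 2*r+1" "x = 2 * fv r h A s a + fst (last (snd (R r h A s (Suc (fv r h A s a)))))"
    using assms(2) unfolding cert_def by auto
  note f = fv_props[OF assms(1) a(1)]
  have "fst (last (snd (R r h A s (Suc (fv r h A s a))))) \<le> 1"
    using bit_le1[OF assms(1) f(1)] f(2) by simp
  then have "x div 2 = fv r h A s a" using a(2) by linarith
  then show ?thesis using f by simp
qed

lemma aux2: "(x::nat) \<le> 1 \<Longrightarrow> y \<le> 1 \<Longrightarrow> 2*a + x = 2*b + y \<Longrightarrow> a = b" by presburger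

lemma cert_sub:
  assumes "explores_in (gr r h) A s 0 t"
  shows "cert r h A s \<subseteq> {..<2*t}" "card (cert r h A s) = 2*r+1"
proof -
  define F where "F = fv r h A s"
  define B where "B = (\<lambda>a. fst (last (snd (R r h A s (Suc (F a))))))"
  have ce: "cert r h A s = (\<lambda>a. 2 * F a + B a) ` {..<2*r+1}" unfolding cert_def F_def B_def ..
  have b: "B a \<le> 1" if "a < 2*r+1" for a
    using bit_le1[OF assms fv_props(1)[OF assms that]] fv_props(2)[OF assms that] unfolding B_def F_def by simp
  have f: "F a < t" if "a < 2*r+1" for a using fv_props(1)[OF assms that] unfolding F_def .
  have f2: "fst (R r h A s (Suc (F a))) = 2*r+1+a" if "a < 2*r+1" for a using fv_props(2)[OF assms that] unfolding F_def .
  show "cert r h A s \<subseteq> {..<2*t}"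
  proof
    fix x assume "x \<in> cert r h A s"
    then have "x \<in> (\<lambda>a. 2 * F a + B a) ` {..<2*r+1}" by (simp only: ce)
    then obtain a where a: "a < 2*r+1" "x = 2 * F a + B a" by auto
    have "2 * F a + B a < 2*t" using b[OF a(1)] f[OF a(1)] by linarith
    then show "x \<in> {..<2*t}" using a(2) by simp
  qed
  have "inj_on (\<lambda>a. 2 * F a + B a) {..<2*r+1}"
  proof (rule inj_onI)
    fix a1 a2 assume a1: "a1 \<in> {..<2*r+1}" and a2: "a2 \<in> {..<2*r+1}"
      and eq: "2 * F a1 + B a1 = 2 * F a2 + B a2"
    have "F a1 = F a2" using aux2[OF b[of a1] b[of a2] eq] a1 a2 by simp
    moreover have "a1 < 2*r+1" "a2 < 2*r+1" using a1 a2 by auto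
    ultimately have "2*r+1+a1 = 2*r+1+a2" using f2 by metis
    then show "a1 = a2" by simp
  qed
  then show "card (cert r h A s) = 2*r+1" unfolding ce by (simp add: card_image)
qed


lemma R_pos: "fst (R r h A s k) < 4*r+2"
proof (induction k)
  case 0 then show ?case by (simp add: R0)
next
  case (Suc k)
  show ?case
  proof (cases "A s (deg (gr r h) 0) (snd (run (gr r h) A s 0 k))")
    case None
    then show ?thesis using Suc run_Suc_None[where A=A and s=s and G="gr r h" and v=0 and k=k] by (simp add: R_def)
  next
    case (Some p)
    then show ?thesis using run_Suc_Some[where A=A and s=s and G="gr r h" and v=0 and k=k and p=p]
      gport_lt[of r h] by (simp add: R_def port_gr)
  qed
qed

lemma no_mismatch:
  assumes ex: "explores_in (gr r h) A s 0 t" and ex': "explores_in (gr r h') A s 0 t"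
    and ce: "cert r h A s = cert r h' A s" and k: "k < t"
    and y: "y < 2*r+1" and w: "fst (R r h A s (Suc k)) = 2*r+1+y"
    and w': "fst (R r h' A s (Suc k)) < 2*r+1"
  shows "\<exists>j\<le>k. fst (R r h A s j) = 2*r+1+y"
proof (rule ccontr)
  assume "\<not> (\<exists>j\<le>k. fst (R r h A s j) = 2*r+1+y)"
  then have nv: "\<forall>j\<le>k. fst (R r h A s j) \<noteq> 2*r+1+y" by blast
  define x where "x = 2*k + fst (last (snd (R r h A s (Suc k))))"
  have "x \<in> cert r h' A s" using first_in_cert[OF ex k y w nv] ce by (simp add: x_def)
  then have c: "2*r+1 \<le> fst (R r h' A s (Suc (x div 2)))" using cert_hidden[OF ex'] by blast
  have "fst (last (snd (R r h A s (Suc k)))) \<le> 1" using bit_le1[OF ex k] w by simp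
  then have "x div 2 = k" unfolding x_def by linarith
  then show False using c w' by simp
qed

lemma step_claim:
  assumes h1: "h1 \<in> fam r" and h2: "h2 \<in> fam r"
    and ex1: "explores_in (gr r h1) A s 0 t" and ex2: "explores_in (gr r h2) A s 0 t"
    and ce: "cert r h1 A s = cert r h2 A s" and k: "k < t"
    and same: "\<forall>j\<le>k. R r h1 A s j = R r h2 A s j"
    and hv: "\<forall>a<2*r+1. (\<exists>j\<le>k. fst (R r h1 A s j) = 2*r+1+a) \<longrightarrow> h1 a = h2 a"
    and u: "u = fst (R r h1 A s k)" and p: "p < gdeg r u"
    and e1: "fst (R r h1 A s (Suc k)) = fst (gport r h1 u p)"
    and e2: "fst (R r h2 A s (Suc k)) = fst (gport r h2 u p)"
  shows "gport r h1 u p = gport r h2 u p \<and>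
     (2*r+1 \<le> fst (gport r h1 u p) \<longrightarrow> h1 (fst (gport r h1 u p) - (2*r+1)) = h2 (fst (gport r h1 u p) - (2*r+1)))"
proof -
  have u4: "u < 4*r+2" using R_pos[of r h1 A s k] u by simp
  have hv2: "h1 a = h2 a" if aa: "a < 2*r+1" and ex: "\<exists>j\<le>k. fst (R r h2 A s j) = 2*r+1+a" for a
  proof -
    obtain j where j: "j \<le> k" "fst (R r h2 A s j) = 2*r+1+a" using ex by blast
    then have "fst (R r h1 A s j) = 2*r+1+a" using same by simp
    then have "\<exists>j\<le>k. fst (R r h1 A s j) = 2*r+1+a" using j(1) by blast
    then show ?thesis using hv aa by blast
  qed
  show ?thesis
  proof (cases "u < 2*r+1")
    case False
    define a where "a = u - (2*r+1)"
    have a: "a < 2*r+1" "u = 2*r+1+a" using False u4 by (auto simp: a_def)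
    have "\<exists>j\<le>k. fst (R r h1 A s j) = 2*r+1+a" using u a by auto
    then have ha: "h1 a = h2 a" using hv a(1) by blast
    have pp: "p = 0 \<or> p = 1" using p False u4 by (auto simp: gdeg_def)
    obtain c where c: "c = (a + h1 a) mod (2*r+1)" by simp
    have cm: "c < 2*r+1" using c by simp
    show ?thesis
    proof (cases "p = 0")
      case True
      then show ?thesis using gp5[of a r h1] gp5[of a r h2] a ha by simp
    next
      case False
      then have p1: "p = Suc 0" using pp by simp
      have "gport r h1 u p = (c, 2*r - h1 a)" using gp6[of a r h1] a c p1 by simp
      moreover have "gport r h2 u p = (c, 2*r - h1 a)" using gp6[of a r h2] a c p1 ha by simp
      ultimately show ?thesis using cm by simp
    qed
  next
    case True
    have pp: "p < 2*r" using p True by (simp add: gdeg_def)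
    obtain b where b: "b = (u + Suc p) mod (2*r+1)" by simp
    have bm: "b < 2*r+1" using b by simp
    note g1 = gport_clique_eq[OF True pp b, of h1] and g2 = gport_clique_eq[OF True pp b, of h2]
    show ?thesis
    proof (cases "Suc p \<le> r")
      case c: True
      show ?thesis
      proof (cases "h1 u = Suc p"; cases "h2 u = Suc p")
        assume "h1 u = Suc p" "h2 u = Suc p"
        then show ?thesis using g1 g2 c by simp
      next
        assume "h1 u \<noteq> Suc p" "h2 u \<noteq> Suc p"
        then show ?thesis using g1 g2 c bm by simp
      next
        assume a1: "h1 u = Suc p" and a2: "h2 u \<noteq> Suc p"
        have "\<exists>j\<le>k. fst (R r h1 A s j) = 2*r+1+u"
          using no_mismatch[OF ex1 ex2 ce k True] e1 e2 g1 g2 c a1 a2 bm by simp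
        then show ?thesis using hv True a1 a2 by auto
      next
        assume a1: "h1 u \<noteq> Suc p" and a2: "h2 u = Suc p"
        have "\<exists>j\<le>k. fst (R r h2 A s j) = 2*r+1+u"
          using no_mismatch[OF ex2 ex1 ce[symmetric] k True] e1 e2 g1 g2 c a1 a2 bm by simp
        then show ?thesis using hv2 True a1 a2 by auto
      qed
    next
      case c: False
      show ?thesis
      proof (cases "h1 b = 2*r+1 - Suc p"; cases "h2 b = 2*r+1 - Suc p")
        assume "h1 b = 2*r+1 - Suc p" "h2 b = 2*r+1 - Suc p"
        then show ?thesis using g1 g2 c by simp
      next
        assume "h1 b \<noteq> 2*r+1 - Suc p" "h2 b \<noteq> 2*r+1 - Suc p"
        then show ?thesis using g1 g2 c bm by simp
      next
        assume a1: "h1 b = 2*r+1 - Suc p" and a2: "h2 b \<noteq> 2*r+1 - Suc p"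
        have "\<exists>j\<le>k. fst (R r h1 A s j) = 2*r+1+b"
          using no_mismatch[OF ex1 ex2 ce k bm] e1 e2 g1 g2 c a1 a2 bm by simp
        then show ?thesis using hv bm a1 a2 by auto
      next
        assume a1: "h1 b \<noteq> 2*r+1 - Suc p" and a2: "h2 b = 2*r+1 - Suc p"
        have "\<exists>j\<le>k. fst (R r h2 A s j) = 2*r+1+b"
          using no_mismatch[OF ex2 ex1 ce[symmetric] k bm] e1 e2 g1 g2 c a1 a2 bm by simp
        then show ?thesis using hv2 bm a1 a2 by auto
      qed
    qed
  qed
qed


lemma determ:
  assumes h1: "h1 \<in> fam r" and h2: "h2 \<in> fam r"
    and ex1: "explores_in (gr r h1) A s 0 t" and ex2: "explores_in (gr r h2) A s 0 t"
    and ce: "cert r h1 A s = cert r h2 A s"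
  shows "h1 = h2"
proof -
  have inv: "(\<forall>j\<le>k. R r h1 A s j = R r h2 A s j) \<and>
     (\<forall>a<2*r+1. (\<exists>j\<le>k. fst (R r h1 A s j) = 2*r+1+a) \<longrightarrow> h1 a = h2 a)" if "k \<le> t" for k
    using that
  proof (induction k)
    case 0
    show ?case by (simp add: R0)
  next
    case (Suc k)
    then have k: "k < t" by simp
    have IH: "\<forall>j\<le>k. R r h1 A s j = R r h2 A s j"
      "\<forall>a<2*r+1. (\<exists>j\<le>k. fst (R r h1 A s j) = 2*r+1+a) \<longrightarrow> h1 a = h2 a" using Suc k by auto
    define u where "u = fst (R r h1 A s k)"
    define H where "H = snd (R r h1 A s k)"
    have Rk: "R r h2 A s k = (u, H)" using IH(1) by (simp add: u_def H_def)
    obtain p1 where p1: "A s (2*r) H = Some p1" "p1 < gdeg r u"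
      "R r h1 A s (Suc k) = (fst (gport r h1 u p1), H @ [(snd (gport r h1 u p1), gdeg r (fst (gport r h1 u p1)))])"
      using R_step[OF ex1 k] unfolding u_def[symmetric] H_def[symmetric] by metis
    obtain p2 where p2: "A s (2*r) H = Some p2"
      "R r h2 A s (Suc k) = (fst (gport r h2 u p2), H @ [(snd (gport r h2 u p2), gdeg r (fst (gport r h2 u p2)))])"
      using R_step[OF ex2 k] unfolding Rk by auto
    have pe: "p2 = p1" using p1(1) p2(1) by simp
    have cl: "gport r h1 u p1 = gport r h2 u p1 \<and>
     (2*r+1 \<le> fst (gport r h1 u p1) \<longrightarrow> h1 (fst (gport r h1 u p1) - (2*r+1)) = h2 (fst (gport r h1 u p1) - (2*r+1)))"
      by (rule step_claim[OF h1 h2 ex1 ex2 ce k IH(1) IH(2) u_def p1(2)]) (use p1(3) p2(2) pe in simp_all)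
    have eqS: "R r h1 A s (Suc k) = R r h2 A s (Suc k)" using p1(3) p2(2) pe cl by simp
    show ?case
    proof (intro conjI allI impI)
      fix j assume "j \<le> Suc k"
      then show "R r h1 A s j = R r h2 A s j" using IH(1) eqS by (cases "j = Suc k") auto
    next
      fix a assume a: "a < 2*r+1" and "\<exists>j\<le>Suc k. fst (R r h1 A s j) = 2*r+1+a"
      then obtain j where j: "j \<le> Suc k" "fst (R r h1 A s j) = 2*r+1+a" by blast
      show "h1 a = h2 a"
      proof (cases "j = Suc k")
        case True
        then have w: "fst (gport r h1 u p1) = 2*r+1+a" using j p1(3) by simp
        then have "2*r+1 \<le> fst (gport r h1 u p1)" by simp
        then have "h1 (fst (gport r h1 u p1) - (2*r+1)) = h2 (fst (gport r h1 u p1) - (2*r+1))" using cl by blast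
        then show ?thesis unfolding w by simp
      next
        case False
        then show ?thesis using IH(2) a j by (metis le_SucE)
      qed
    qed
  qed
  have "h1 a = h2 a" if a: "a < 2*r+1" for a
  proof -
    obtain k where k: "k < t" "fst (R r h1 A s (Suc k)) = 2*r+1+a" using R_visit[OF ex1 a] by blast
    then have "\<exists>j\<le>t. fst (R r h1 A s j) = 2*r+1+a" by (intro exI[of _ "Suc k"]) simp
    then show ?thesis using inv[of t] a by blast
  qed
  then show ?thesis using h1 h2 unfolding fam_def by (intro PiE_ext[of h1 "{..<2*r+1}" "\<lambda>_. {1..r}"]) auto
qed



lemma deg_le_nodes:
  assumes "valid_pgraph G" "u < nodes G"
  shows "deg G u \<le> nodes G"
proof -
  have inj: "inj_on (\<lambda>p. fst (port G u p)) {..<deg G u}" using assms unfolding valid_pgraph_def by blast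
  have sub: "(\<lambda>p. fst (port G u p)) ` {..<deg G u} \<subseteq> {..<nodes G}" using assms unfolding valid_pgraph_def by auto
  have "card {..<deg G u} \<le> card {..<nodes G}" by (rule card_inj_on_le[OF inj sub]) simp
  then show ?thesis by simp
qed

lemma finite_valid: "finite {G. valid_pgraph G \<and> nodes G = n}"
proof -
  define D where "D = {d::nat\<Rightarrow>nat. \<forall>x. (x \<in> {..<n} \<longrightarrow> d x \<in> {..n}) \<and> (x \<notin> {..<n} \<longrightarrow> d x = 0)}"
  define P1 where "P1 = {q::nat\<Rightarrow>nat\<times>nat. \<forall>y. (y \<in> {..<n} \<longrightarrow> q y \<in> {..<n} \<times> {..n}) \<and> (y \<notin> {..<n} \<longrightarrow> q y = (0,0))}"
  define P where "P = {p::nat\<Rightarrow>nat\<Rightarrow>nat\<times>nat. \<forall>x. (x \<in> {..<n} \<longrightarrow> p x \<in> P1) \<and> (x \<notin> {..<n} \<longrightarrow> p x = (\<lambda>_. (0,0)))}"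
  have fD: "finite D" unfolding D_def by (rule finite_set_of_finite_funs) auto
  have fP1: "finite P1" unfolding P1_def by (rule finite_set_of_finite_funs) auto
  have fP: "finite P" unfolding P_def by (rule finite_set_of_finite_funs) (auto simp: fP1)
  have "{G. valid_pgraph G \<and> nodes G = n} \<subseteq> (\<lambda>(d,p). \<lparr>nodes = n, deg = d, port = p\<rparr>) ` (D \<times> P)"
  proof
    fix G assume G: "G \<in> {G. valid_pgraph G \<and> nodes G = n}"
    then have v: "valid_pgraph G" and nG: "nodes G = n" by auto
    have dl: "deg G u \<le> n" if "u < n" for u using deg_le_nodes[OF v] that nG by simp
    have d: "deg G \<in> D" unfolding D_def using v dl nG unfolding valid_pgraph_def by auto
    have pv: "port G u p \<in> {..<n} \<times> {..n}" if "u < n" "p < n" for u p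
    proof (cases "p < deg G u")
      case True
      then have "fst (port G u p) < n" "snd (port G u p) < deg G (fst (port G u p))"
        using v that nG unfolding valid_pgraph_def by auto
      then show ?thesis using dl[of "fst (port G u p)"] by (cases "port G u p") auto
    next
      case False
      then have "port G u p = (0,0)" using v unfolding valid_pgraph_def by blast
      then show ?thesis using that by simp
    qed
    have p0: "port G u p = (0,0)" if "\<not> (u < n \<and> p < n)" for u p
    proof -
      have "\<not> (u < nodes G \<and> p < deg G u)" using that dl nG by (metis order.strict_trans2)
      then show ?thesis using v unfolding valid_pgraph_def by blast
    qed
    have p: "port G \<in> P" unfolding P_def P1_def using pv p0 by auto
    have "G = \<lparr>nodes = n, deg = deg G, port = port G\<rparr>" using nG by (cases G) simp
    then show "G \<in> (\<lambda>(d,p). \<lparr>nodes = n, deg = d, port = p\<rparr>) ` (D \<times> P)" using d p by force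
  qed
  moreover have "finite ((\<lambda>(d,p). \<lparr>nodes = n, deg = d, port = p\<rparr>) ` (D \<times> P))" using fD fP by simp
  ultimately show ?thesis by (rule finite_subset)
qed

lemma adv_le_max:
  assumes "valid_pgraph G" "nodes G = n" "v < n"
  shows "length (f G v) \<le> max_advice f n"
proof -
  have eq: "{length (f G v) | G v. valid_pgraph G \<and> nodes G = n \<and> v < n} =
     (\<lambda>(G,v). length (f G v)) ` ({G. valid_pgraph G \<and> nodes G = n} \<times> {..<n})" by auto
  have "finite {length (f G v) | G v. valid_pgraph G \<and> nodes G = n \<and> v < n}"
    unfolding eq using finite_valid by simp
  then show ?thesis unfolding max_advice_def by (rule Max_ge) (use assms in blast)
qed


lemma card_fam: "card (fam r) = r ^ (2*r+1)"
  unfolding fam_def by (simp add: card_PiE)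

lemma counting:
  assumes all: "\<forall>h \<in> fam r. \<exists>t < T. explores_in (gr r h) A (f (gr r h) 0) 0 t"
    and adv: "\<forall>h \<in> fam r. length (f (gr r h) 0) \<le> L"
  shows "r ^ (2*r+1) \<le> (\<Sum>i\<le>L. 2^i) * T * ((2*T) choose (2*r+1))"
proof -
  define tt where "tt h = (SOME t. t < T \<and> explores_in (gr r h) A (f (gr r h) 0) 0 t)" for h
  have tt: "tt h < T \<and> explores_in (gr r h) A (f (gr r h) 0) 0 (tt h)" if "h \<in> fam r" for h
  proof -
    have "\<exists>t. t < T \<and> explores_in (gr r h) A (f (gr r h) 0) 0 t" using all that by blast
    then show ?thesis unfolding tt_def by (rule someI_ex)
  qed
  define cf where "cf h = (f (gr r h) 0, tt h, cert r h A (f (gr r h) 0))" for h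
  define S1 where "S1 = {xs :: bool list. set xs \<subseteq> UNIV \<and> length xs \<le> L}"
  define S3 where "S3 = {E. E \<subseteq> {..<2*T} \<and> card E = 2*r+1}"
  have inj: "inj_on cf (fam r)"
  proof (rule inj_onI)
    fix h1 h2 assume h1: "h1 \<in> fam r" and h2: "h2 \<in> fam r" and e: "cf h1 = cf h2"
    then have s: "f (gr r h1) 0 = f (gr r h2) 0" and t: "tt h1 = tt h2"
      and c: "cert r h1 A (f (gr r h1) 0) = cert r h2 A (f (gr r h2) 0)" using e by (simp_all add: cf_def)
    have ex1: "explores_in (gr r h1) A (f (gr r h1) 0) 0 (tt h1)" using tt[OF h1] by blast
    have ex2: "explores_in (gr r h2) A (f (gr r h1) 0) 0 (tt h1)" using tt[OF h2] s t by simp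
    have ce: "cert r h1 A (f (gr r h1) 0) = cert r h2 A (f (gr r h1) 0)" using c s by simp
    show "h1 = h2" by (rule determ[OF h1 h2 ex1 ex2 ce])
  qed
  have sub: "cf ` fam r \<subseteq> S1 \<times> {..<T} \<times> S3"
  proof
    fix x assume "x \<in> cf ` fam r"
    then obtain h where h: "h \<in> fam r" "x = cf h" by blast
    have ex: "explores_in (gr r h) A (f (gr r h) 0) 0 (tt h)" and tl: "tt h < T" using tt[OF h(1)] by blast+
    have "{..<2*tt h} \<subseteq> {..<2*T}" using tl by auto
    then have "cert r h A (f (gr r h) 0) \<subseteq> {..<2*T}" using cert_sub(1)[OF ex] by (rule subset_trans[rotated])
    then have "cert r h A (f (gr r h) 0) \<in> S3" using cert_sub(2)[OF ex] unfolding S3_def by simp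
    moreover have "f (gr r h) 0 \<in> S1" using adv h(1) unfolding S1_def by blast
    moreover have "tt h \<in> {..<T}" using tl by simp
    ultimately show "x \<in> S1 \<times> {..<T} \<times> S3" using h(2) unfolding cf_def by simp
  qed
  have fin: "finite (S1 \<times> {..<T} \<times> S3)"
  proof -
    have "finite S1" unfolding S1_def using finite_lists_length_le[of "UNIV :: bool set" L] by simp
    moreover have "finite S3" unfolding S3_def by (rule finite_subset[of _ "Pow {..<2*T}"]) auto
    ultimately show ?thesis by simp
  qed
  have "r ^ (2*r+1) = card (cf ` fam r)" using card_image[OF inj] card_fam by simp
  also have "\<dots> \<le> card (S1 \<times> {..<T} \<times> S3)" by (rule card_mono[OF fin sub])
  also have "\<dots> = card S1 * T * card S3" by (simp add: card_cartesian_product)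
  also have "card S1 = (\<Sum>i\<le>L. 2^i)" unfolding S1_def using card_lists_length_le[of "UNIV :: bool set" L] by simp
  also have "card S3 = (2*T) choose (2*r+1)" unfolding S3_def using n_subsets[of "{..<2*T}" "2*r+1"] by simp
  finally show ?thesis .
qed


lemma pow_le_exp_fact: "(real n)^n \<le> exp (real n) * fact n"
proof -
  have s: "(\<lambda>i. (real n)^i /\<^sub>R fact i) sums exp (real n)" by (rule exp_converges)
  have "(\<Sum>i\<in>{n}. (real n)^i /\<^sub>R fact i) \<le> (\<Sum>i. (real n)^i /\<^sub>R fact i)"
    by (rule sum_le_suminf) (use s in \<open>auto simp: sums_iff\<close>)
  then have "(real n)^n / fact n \<le> exp (real n)" using s by (simp add: sums_iff divide_inverse mult.commute)
  then show ?thesis by (simp add: divide_le_eq mult.commute)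
qed


lemma fact_lower:
  fixes x :: real
  assumes "1 \<le> x" "real m \<ge> 2*x"
  shows "(2*x/3)^m \<le> fact m"
proof -
  have "(2*x)^m \<le> (real m)^m" using assms by (intro power_mono) auto
  also have "\<dots> \<le> exp (real m) * fact m" by (rule pow_le_exp_fact)
  also have "exp (real m) = exp 1 ^ m" by (simp add: exp_of_nat_mult[symmetric])
  also have "exp 1 ^ m \<le> (3::real)^m" using exp_le by (intro power_mono) auto
  finally have "(2*x)^m \<le> 3^m * fact m" by (simp add: mult_right_mono)
  then show ?thesis by (simp add: power_divide divide_le_eq mult.commute)
qed

lemma numeric:
  fixes e :: real and r L T :: nat
  assumes e1: "1 \<le> e" and e2: "e < 2" and r1: "1 \<le> r" and rl: "2000/(2-e) < ln (real r)"
    and L: "real L \<le> (2-e)/4 * (real (4*r+2) * log 2 (real (4*r+2)))"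
    and T: "real T \<le> real (4*r+2) powr e + 1"
  shows "2^(L+1) * real T * (2 * real T)^(2*r+1) < (real r)^(2*r+1) * fact (2*r+1)"
proof -
  define x where "x = real r"
  define n where "n = real (4*r+2)"
  define m where "m = 2*r+1"
  define l where "l = ln x"
  define u where "u = 2 - e"
  have x1: "1 \<le> x" using r1 by (simp add: x_def)
  have u: "0 < u" "u \<le> 1" using e1 e2 by (auto simp: u_def)
  have "0 < 2000/(2-e)" using e2 by simp
  then have lpos: "0 < l" using rl unfolding l_def x_def by linarith
  have lx: "l \<le> x" using ln_le_minus_one[of x] x1 by (simp add: l_def)
  have n6: "n \<le> 6*x" "1 \<le> n" "n = 4*x+2" using x1 by (auto simp: n_def x_def)
  have mx: "real m = 2*x+1" by (simp add: m_def x_def)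
  have "2000/u < l" using rl by (simp add: u_def l_def x_def)
  then have ul: "2000 < u * l" using u(1) by (simp add: divide_less_eq mult.commute)
  have "2000*x < (u*l)*x" using ul x1 by (intro mult_strict_right_mono) auto
  then have uP: "2000 * x < u * (x * l)" by (simp add: mult_ac)
  have npe: "1 \<le> n powr e" using n6 e1 by (simp add: ge_one_powr_ge_zero)
  have npe2: "n powr e \<le> 36 * x powr e"
  proof -
    have "n powr e \<le> (6*x) powr e" using n6 e1 by (intro powr_mono2) auto
    also have "\<dots> = 6 powr e * x powr e" using x1 by (simp add: powr_mult)
    also have "6 powr e \<le> 6 powr 2" using e2 by (intro powr_mono) auto
    then have "6 powr e * x powr e \<le> 36 * x powr e" using x1 by (intro mult_right_mono) auto
    finally show ?thesis .
  qed
  define B where "B = 144 * x powr e"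
  have Bpos: "0 < B" using x1 by (simp add: B_def)
  have T1: "real T \<le> B" "2 * real T \<le> B" using T npe npe2 by (auto simp: B_def n_def)
  have RHS: "2^(L+1) * real T * (2 * real T)^m \<le> 2^(L+1) * B^(m+1)"
  proof -
    have "real T * (2 * real T)^m \<le> B * B^m" using T1 by (intro mult_mono power_mono) auto
    then show ?thesis by (simp add: mult.assoc)
  qed
  have LHS: "(2*x*x/3)^m \<le> x^m * fact m"
  proof -
    have "(2*x/3)^m \<le> fact m" using fact_lower[of x m] x1 mx by simp
    then have "x^m * (2*x/3)^m \<le> x^m * fact m" using x1 by (intro mult_left_mono) auto
    moreover have "(2*x*x/3)^m = x^m * (2*x/3)^m" by (subst power_mult_distrib[symmetric]) (simp add: algebra_simps)
    ultimately show ?thesis by simp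
  qed
  have lnL: "real L * ln 2 \<le> u/4 * (6*x) * (ln 6 + l)"
  proof -
    have "real L * ln 2 \<le> u/4 * (n * log 2 n) * ln 2" using L u by (simp add: n_def u_def)
    also have "\<dots> = u/4 * n * ln n" by (simp add: log_def)
    also have "ln n \<le> ln 6 + l"
    proof -
      have "ln n \<le> ln (6*x)" using n6 x1 by (subst ln_le_cancel_iff) auto
      also have "ln (6*x) = ln 6 + l" using x1 by (simp add: l_def ln_mult_pos)
      finally show ?thesis .
    qed
    then have "u/4 * n * ln n \<le> u/4 * (6*x) * (ln 6 + l)"
      using u n6 lpos by (intro mult_mono) auto
    finally show ?thesis .
  qed
  have lnB: "ln B = ln 144 + e * l" using x1 by (simp add: B_def ln_mult l_def)
  have c1: "ln 144 \<le> (143::real)" using ln_le_minus_one[of 144] by simp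
  have c2: "ln 6 \<le> (5::real)" using ln_le_minus_one[of 6] by simp
  have c3: "ln 3 \<le> (2::real)" using ln_le_minus_one[of 3] by simp
  have c4: "ln 2 \<le> (1::real)" "0 \<le> ln (2::real)" using ln_le_minus_one[of 2] by simp_all
  have c5: "0 \<le> ln (6::real)" "0 \<le> ln (144::real)" by simp_all
  have key: "real (L+1) * ln 2 + real (m+1) * ln B < real m * ln (2*x*x/3)"
  proof -
    have lnA: "ln (2*x*x/3) = ln 2 + 2*l - ln 3" using x1 by (simp add: ln_mult ln_div l_def)
    define P where "P = x * l"
    have P0: "0 \<le> P" using x1 lpos by (simp add: P_def)
    have e_eq: "e = 2 - u" by (simp add: u_def)
    have t1: "u/4 * (6*x) * (ln 6 + l) = 3/2 * (u*x) * ln 6 + 3/2 * (u * P)" by (simp add: P_def algebra_simps)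
    have t2: "real (m+1) * ln B = (2*x+2) * ln 144 + 4 * P - 2 * (u*P) + 4*l - 2 * (u*l)"
      using mx by (simp add: lnB e_eq P_def algebra_simps)
    have t3: "real m * ln (2*x*x/3) = (2*x+1) * ln 2 - (2*x+1) * ln 3 + 4 * P + 2*l"
      using mx unfolding lnA by (simp add: P_def algebra_simps)
    have f1: "0 \<le> u*l" using u lpos by auto
    define A2 where "A2 = u*x*ln 6"
    define A3 where "A3 = (2*x+2) * ln 144"
    define A4 where "A4 = (2*x+1) * ln 3"
    define A5 where "A5 = (2*x+1) * ln 2"
    define A1 where "A1 = u*P"
    define A6 where "A6 = u*l"
    have f2: "A2 \<le> x * 5" unfolding A2_def using u x1 c2 c5 by (intro mult_mono) auto
    have "A3 \<le> (2*x+2) * 143" unfolding A3_def using c1 x1 by (intro mult_left_mono) auto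
    then have f3: "A3 \<le> 286*x + 286" by simp
    have "A4 \<le> (2*x+1) * 2" unfolding A4_def using c3 x1 by (intro mult_left_mono) auto
    then have f4: "A4 \<le> 4*x + 2" by simp
    have f5: "0 \<le> A5" unfolding A5_def using c4 x1 by simp
    have f6: "2000 * x < A1" using uP by (simp add: P_def A1_def)
    have t1': "real L * ln 2 \<le> 3/2 * A2 + 3/2 * A1" using lnL t1 unfolding A1_def A2_def by linarith
    have t2': "real (m+1) * ln B = A3 + 4 * P - 2 * A1 + 4*l - 2 * A6" using t2 by (simp add: A1_def A3_def A6_def)
    have t3': "real m * ln (2*x*x/3) = A5 - A4 + 4 * P + 2*l" using t3 by (simp add: A4_def A5_def)
    have f7: "0 \<le> A6" using f1 by (simp add: A6_def)
    have g0: "real (L+1) * ln 2 = real L * ln 2 + ln 2" by (simp add: algebra_simps)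
    define X1 where "X1 = real (L+1) * ln (2::real)"
    define X2 where "X2 = real (m+1) * ln B"
    define X3 where "X3 = real m * ln (2*x*x/3)"
    define Y where "Y = real L * ln (2::real)"
    define Z where "Z = ln (2::real)"
    have "X1 = Y + Z" "Y \<le> 3/2 * A2 + 3/2 * A1" "X2 = A3 + 4 * P - 2 * A1 + 4*l - 2 * A6"
      "X3 = A5 - A4 + 4 * P + 2*l" "Z \<le> 1"
      using g0 t1' t2' t3' c4 by (simp_all add: X1_def X2_def X3_def Y_def Z_def)
    then have "X1 + X2 < X3" using f2 f3 f4 f5 f6 f7 lx x1 by linarith
    then show ?thesis by (simp add: X1_def X2_def X3_def)
  qed
  have "2^(L+1) * B^(m+1) < (2*x*x/3)^m"
  proof -
    have p1: "0 < 2^(L+1) * B^(m+1)" using Bpos by simp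
    have p2: "0 < (2*x*x/3)^m" using x1 by simp
    have "ln (2^(L+1) * B^(m+1)) = real (L+1) * ln 2 + real (m+1) * ln B"
      using Bpos by (simp add: ln_mult ln_realpow algebra_simps)
    also have "\<dots> < real m * ln (2*x*x/3)" by (rule key)
    also have "\<dots> = ln ((2*x*x/3)^m)" using x1 by (simp add: ln_realpow)
    finally show ?thesis using p1 p2 by simp
  qed
  then have "2^(L+1) * real T * (2 * real T)^m < x^m * fact m" using RHS LHS by linarith
  then show ?thesis by (simp only: x_def m_def)
qed


lemma sum_pow2_le: "(\<Sum>i\<le>L. (2::nat)^i) \<le> 2^(L+1)"
  by (induction L) auto

theorem mainTheorem10:
  fixes \<epsilon> :: real and f :: advice_fn and A :: algo
  assumes "\<epsilon> < 2"
    and "(\<lambda>n. real (max_advice f n)) \<in> o(\<lambda>n. real n * log 2 (real n))"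
  shows "\<exists>c > 0. infinite {n. \<exists>G v. valid_pgraph G \<and> nodes G = n \<and> v < n \<and>
            (\<forall>t. explores_in G A (f G v) v t \<longrightarrow> real t \<ge> c * real n powr \<epsilon>)}"
proof -
  define e where "e = max \<epsilon> 1"
  have e1: "1 \<le> e" and e2: "e < 2" and ee: "\<epsilon> \<le> e" using assms(1) by (auto simp: e_def)
  define \<delta> where "\<delta> = (2-e)/4"
  have dpos: "0 < \<delta>" using e2 by (simp add: \<delta>_def)
  have "eventually (\<lambda>n. norm (real (max_advice f n)) \<le> \<delta> * norm (real n * log 2 (real n))) at_top"
    by (rule landau_o.smallD[OF assms(2) dpos])
  then obtain N where N: "\<And>n. n \<ge> N \<Longrightarrow> norm (real (max_advice f n)) \<le> \<delta> * norm (real n * log 2 (real n))"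
    unfolding eventually_at_top_linorder by blast
  define S where "S = {n. \<exists>G v. valid_pgraph G \<and> nodes G = n \<and> v < n \<and>
            (\<forall>t. explores_in G A (f G v) v t \<longrightarrow> real t \<ge> 1 * real n powr \<epsilon>)}"
  have mem: "4*r+2 \<in> S" if r1: "1 \<le> r" and rN: "N \<le> 4*r+2" and rl: "2000/(2-e) < ln (real r)" for r
  proof (rule ccontr)
    assume nS: "4*r+2 \<notin> S"
    define n where "n = 4*r+2"
    define L where "L = max_advice f n"
    define T where "T = nat \<lceil>real n powr e\<rceil>"
    have n1: "1 \<le> real n" by (simp add: n_def)
    have all: "\<forall>h \<in> fam r. \<exists>t < T. explores_in (gr r h) A (f (gr r h) 0) 0 t"
    proof
      fix h assume h: "h \<in> fam r"
      have "\<not> (\<forall>t. explores_in (gr r h) A (f (gr r h) 0) 0 t \<longrightarrow> real t \<ge> 1 * real n powr \<epsilon>)"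
        using nS gr_valid[OF h] nodes_gr[of r h] unfolding S_def n_def by auto
      then obtain t where t: "explores_in (gr r h) A (f (gr r h) 0) 0 t" "real t < real n powr \<epsilon>" by auto
      have "real n powr \<epsilon> \<le> real n powr e" using n1 ee by (intro powr_mono) auto
      also have "\<dots> \<le> real T" unfolding T_def by linarith
      finally have "t < T" using t(2) by simp
      then show "\<exists>t < T. explores_in (gr r h) A (f (gr r h) 0) 0 t" using t(1) by blast
    qed
    have adv: "\<forall>h \<in> fam r. length (f (gr r h) 0) \<le> L"
      using adv_le_max gr_valid nodes_gr unfolding L_def n_def by fastforce
    have cnt: "r ^ (2*r+1) \<le> (\<Sum>i\<le>L. 2^i) * T * ((2*T) choose (2*r+1))" by (rule counting[where r=r and T=T and A=A and f=f and L=L, OF all adv])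
    have "r ^ (2*r+1) * fact (2*r+1) \<le> (\<Sum>i\<le>L. 2^i) * T * (((2*T) choose (2*r+1)) * fact (2*r+1))"
      using cnt by (simp add: mult_right_mono mult.assoc)
    also have "\<dots> \<le> 2^(L+1) * T * (2*T)^(2*r+1)"
    proof -
      have a: "(\<Sum>i\<le>L. 2^i) * T \<le> 2^(L+1) * T" by (rule mult_right_mono[OF sum_pow2_le]) simp
      have b: "((2*T) choose (2*r+1)) * fact (2*r+1) \<le> (2*T)^(2*r+1)" by (rule binomial_fact_pow)
      show ?thesis using mult_mono[OF a b] by simp
    qed
    finally have natineq: "r ^ (2*r+1) * fact (2*r+1) \<le> 2^(L+1) * T * (2*T)^(2*r+1)" .
    have Lb: "real L \<le> (2-e)/4 * (real (4*r+2) * log 2 (real (4*r+2)))"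
    proof -
      have "0 \<le> log 2 (real n)" using n1 by simp
      then have "norm (real n * log 2 (real n)) = real n * log 2 (real n)" by simp
      then show ?thesis using N[of n] rN unfolding L_def \<delta>_def n_def by simp
    qed
    have Tb: "real T \<le> real (4*r+2) powr e + 1"
    proof -
      have y0: "0 \<le> real n powr e" by simp
      then have "0 \<le> \<lceil>real n powr e\<rceil>" by (simp; linarith)
      then have "real T = of_int \<lceil>real n powr e\<rceil>" unfolding T_def by simp
      then show ?thesis using ceiling_correct[of "real n powr e"] unfolding n_def by linarith
    qed
    have "2^(L+1) * real T * (2 * real T)^(2*r+1) < (real r)^(2*r+1) * fact (2*r+1)"
      by (rule numeric[OF e1 e2 r1 rl Lb Tb])
    moreover have "real (r ^ (2*r+1) * fact (2*r+1)) \<le> real (2^(L+1) * T * (2*T)^(2*r+1))"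
      using natineq by (simp only: of_nat_le_iff)
    moreover have "real (r ^ (2*r+1) * fact (2*r+1)) = (real r)^(2*r+1) * fact (2*r+1)"
      by (simp only: of_nat_mult of_nat_power of_nat_fact)
    moreover have "real (2^(L+1) * T * (2*T)^(2*r+1)) = 2^(L+1) * real T * (2 * real T)^(2*r+1)"
      by (simp only: of_nat_mult of_nat_power of_nat_numeral)
    ultimately show False by linarith
  qed
  have "infinite S"
  proof (subst infinite_nat_iff_unbounded_le, intro allI)
    fix M
    define r where "r = max (max M N) (nat \<lceil>exp (2000/(2-e))\<rceil> + 1)"
    have r1: "1 \<le> r" by (simp add: r_def)
    have "N \<le> r" "M \<le> r" unfolding r_def by linarith+
    then have rN: "N \<le> 4*r+2" "M \<le> 4*r+2" by linarith+
    have "exp (2000/(2-e)) < real r" unfolding r_def by linarith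
    then have "ln (exp (2000/(2-e))) < ln (real r)" using r1 by (subst ln_less_cancel_iff) auto
    then have rl: "2000/(2-e) < ln (real r)" by simp
    show "\<exists>n\<ge>M. n \<in> S" using mem[OF r1 rN(1) rl] rN(2) by blast
  qed
  then show ?thesis unfolding S_def by (intro exI[of _ 1]) simp
qed


end
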